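(* For $q\ge p\ge2$, $\mathrm{Z}_+(K_{p,q})=p$ and $\overline{\mathrm{Z}}_+(K_{p,q})=q$. If $p\ge3$, then $z^+_0(K_{p,q})=p+q-2$; in particular, for $p\ge4$, $z^+_0(K_{p,p})=2p-2>\overline{\mathrm{Z}}_+(K_{p,p})+1$. For $q\ge4$, $\underline{z^+_0}(K_{2,q})=3$ and $z^+_0(K_{2,q})=q+1$.
   Context: All graphs are finite, simple, undirected. PSD color change rule: with $B$ the set of blue vertices and $W=V(G)\setminus B$ the white vertices, let $W_1,\dots,W_k$ be the vertex sets of the connected components of $G[W]$; if $u\in B$, $w\in W_i$, and $w$ is the only white neighbor of $u$ in $G[W_i\cup B]$, then $u$ may color $w$ blue. $S$ is a PSD forcing set if starting with exactly $S$ blue and applying the rule repeatedly, all vertices become blue. $\mathrm{Z}_+(G)$ is the minimum cardinality of a PSD forcing set and $\overline{\mathrm{Z}}_+(G)$ the maximum cardinality of an inclusion-minimal PSD forcing set. $\mathfrak{Z}^+(G)$ has as vertices the PSD forcing sets, with $S_1S_2$ an edge iff $|S_1\ominus S_2|=1$; $\mathfrak{Z}^+_k(G)$ is its subgraph induced by PSD forcing sets of size at most $k$. $z^+_0(G)$ is the least $k_0$ with $\mathfrak{Z}^+_k(G)$ connected for all $k\ge k_0$; $\underline{z^+_0}(G)$ is the least $k$ with $\mathfrak{Z}^+_k(G)$ connected. $K_{p,q}$ is the complete bipartite graph with parts of sizes $p,q$. *)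

theory Defs
  imports Main
begin

text \<open>A finite simple graph is given by a vertex set V and a symmetric irreflexive
adjacency relation E (only used on vertices of V).\<close>

definition white_conn :: "'a set \<Rightarrow> ('a \<Rightarrow> 'a \<Rightarrow> bool) \<Rightarrow> 'a set \<Rightarrow> 'a \<Rightarrow> 'a \<Rightarrow> bool" where
  "white_conn V E B x y \<longleftrightarrow> (\<lambda>a b. a \<in> V - B \<and> b \<in> V - B \<and> E a b)\<^sup>*\<^sup>* x y"

definition psd_force :: "'a set \<Rightarrow> ('a \<Rightarrow> 'a \<Rightarrow> bool) \<Rightarrow> 'a set \<Rightarrow> 'a \<Rightarrow> 'a \<Rightarrow> bool" where
  "psd_force V E B u w \<longleftrightarrow> u \<in> V \<and> u \<in> B \<and> w \<in> V - B \<and> E u w \<and>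
     (\<forall>w'. w' \<in> V - B \<and> E u w' \<and> white_conn V E B w w' \<longrightarrow> w' = w)"

inductive psd_reach :: "'a set \<Rightarrow> ('a \<Rightarrow> 'a \<Rightarrow> bool) \<Rightarrow> 'a set \<Rightarrow> 'a set \<Rightarrow> bool"
  for V E S where
  base: "psd_reach V E S S"
| step: "psd_reach V E S B \<Longrightarrow> psd_force V E B u w \<Longrightarrow> psd_reach V E S (insert w B)"

definition psd_forcing_set :: "'a set \<Rightarrow> ('a \<Rightarrow> 'a \<Rightarrow> bool) \<Rightarrow> 'a set \<Rightarrow> bool" where
  "psd_forcing_set V E S \<longleftrightarrow> S \<subseteq> V \<and> psd_reach V E S V"

definition minimal_psd_forcing_set :: "'a set \<Rightarrow> ('a \<Rightarrow> 'a \<Rightarrow> bool) \<Rightarrow> 'a set \<Rightarrow> bool" where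
  "minimal_psd_forcing_set V E S \<longleftrightarrow>
     psd_forcing_set V E S \<and> (\<forall>T. T \<subset> S \<longrightarrow> \<not> psd_forcing_set V E T)"

definition Zplus :: "'a set \<Rightarrow> ('a \<Rightarrow> 'a \<Rightarrow> bool) \<Rightarrow> nat" where
  "Zplus V E = Min (card ` {S. psd_forcing_set V E S})"

definition Zplus_bar :: "'a set \<Rightarrow> ('a \<Rightarrow> 'a \<Rightarrow> bool) \<Rightarrow> nat" where
  "Zplus_bar V E = Max (card ` {S. minimal_psd_forcing_set V E S})"

definition recon_adj :: "'a set \<Rightarrow> 'a set \<Rightarrow> bool" where
  "recon_adj S1 S2 \<longleftrightarrow> card ((S1 - S2) \<union> (S2 - S1)) = 1"

definition recon_vertices :: "'a set \<Rightarrow> ('a \<Rightarrow> 'a \<Rightarrow> bool) \<Rightarrow> nat \<Rightarrow> 'a set set" where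
  "recon_vertices V E k = {S. psd_forcing_set V E S \<and> card S \<le> k}"

text \<open>A graph (vertex set X, adjacency R) is connected: nonempty and any two vertices are
joined by a walk inside X.  (The empty graph is not considered connected.)\<close>
definition graph_connected :: "'b set \<Rightarrow> ('b \<Rightarrow> 'b \<Rightarrow> bool) \<Rightarrow> bool" where
  "graph_connected X R \<longleftrightarrow> X \<noteq> {} \<and>
     (\<forall>x\<in>X. \<forall>y\<in>X. (\<lambda>a b. a \<in> X \<and> b \<in> X \<and> R a b)\<^sup>*\<^sup>* x y)"

definition recon_connected :: "'a set \<Rightarrow> ('a \<Rightarrow> 'a \<Rightarrow> bool) \<Rightarrow> nat \<Rightarrow> bool" where
  "recon_connected V E k \<longleftrightarrow> graph_connected (recon_vertices V E k) recon_adj"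

definition z0plus :: "'a set \<Rightarrow> ('a \<Rightarrow> 'a \<Rightarrow> bool) \<Rightarrow> nat" where
  "z0plus V E = (LEAST k0. \<forall>k\<ge>k0. recon_connected V E k)"

definition z0plus_under :: "'a set \<Rightarrow> ('a \<Rightarrow> 'a \<Rightarrow> bool) \<Rightarrow> nat" where
  "z0plus_under V E = (LEAST k. recon_connected V E k)"

definition KV :: "nat \<Rightarrow> nat \<Rightarrow> (nat + nat) set" where
  "KV p q = Inl ` {..<p} \<union> Inr ` {..<q}"

definition KE :: "nat + nat \<Rightarrow> nat + nat \<Rightarrow> bool" where
  "KE x y \<longleftrightarrow> isl x \<noteq> isl y"

end

theory Submission
  imports Defs
begin


lemma reach_trans:
  assumes "psd_reach V E B C" "psd_reach V E S B"
  shows "psd_reach V E S C"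
  using assms by (induction rule: psd_reach.induct) (auto intro: psd_reach.step)

lemma reach_cases:
  assumes "psd_reach V E S B"
  shows "B = S \<or> (\<exists>u w. psd_force V E S u w)"
  using assms by (induction rule: psd_reach.induct) auto

lemma no_force_not_forcing:
  assumes "\<And>u w. \<not> psd_force V E S u w" "S \<noteq> V"
  shows "\<not> psd_reach V E S V"
  using reach_cases[of V E S V] assms by auto

lemma two_elems: "finite A \<Longrightarrow> 2 \<le> card A \<Longrightarrow> \<exists>x y. x\<in>A \<and> y\<in>A \<and> x\<noteq>y"
  by (meson card_le_Suc0_iff_eq leD less_2_cases_iff order_less_le_trans)

locale kpq =
  fixes p q :: nat
  assumes p2: "2 \<le> p" and q2: "2 \<le> q"
begin

definition Ls :: "(nat + nat) set" where "Ls = Inl ` {..<p}"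
definition Rs :: "(nat + nat) set" where "Rs = Inr ` {..<q}"
abbreviation "VV \<equiv> KV p q"

lemma V_eq: "VV = Ls \<union> Rs" by (simp add: KV_def Ls_def Rs_def)
lemma fin_Ls[simp]: "finite Ls" by (simp add: Ls_def)
lemma fin_Rs[simp]: "finite Rs" by (simp add: Rs_def)
lemma fin_V[simp]: "finite VV" by (simp add: V_eq)
lemma card_Ls[simp]: "card Ls = p" by (simp add: Ls_def card_image)
lemma card_Rs[simp]: "card Rs = q" by (simp add: Rs_def card_image)
lemma disj: "Ls \<inter> Rs = {}" by (auto simp: Ls_def Rs_def)
lemma isl_Ls: "x \<in> Ls \<Longrightarrow> isl x" by (auto simp: Ls_def)
lemma isl_Rs: "x \<in> Rs \<Longrightarrow> \<not> isl x" by (auto simp: Rs_def)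
lemma V_isl: "x \<in> VV \<Longrightarrow> isl x \<longleftrightarrow> x \<in> Ls" using isl_Ls isl_Rs V_eq by auto
lemma Inl0: "Inl 0 \<in> Ls" using p2 by (auto simp: Ls_def)
lemma Inl1: "Inl 1 \<in> Ls" using p2 by (auto simp: Ls_def)
lemma Inr0: "Inr 0 \<in> Rs" using q2 by (auto simp: Rs_def)
lemma Inr1: "Inr 1 \<in> Rs" using q2 by (auto simp: Rs_def)

definition wa where "wa S = card (Ls - S)"
definition wb where "wb S = card (Rs - S)"
definition good where "good S \<longleftrightarrow> wa S = 0 \<or> wb S = 0 \<or> (wb S = 1 \<and> wa S < p) \<or> (wa S = 1 \<and> wb S < q)"

lemma wa_le: "wa S \<le> p" unfolding wa_def using card_mono[of Ls "Ls - S"] by simp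
lemma wb_le: "wb S \<le> q" unfolding wb_def using card_mono[of Rs "Rs - S"] by simp

lemma card_S: assumes "S \<subseteq> VV" shows "card S + wa S + wb S = p + q"
proof -
  have fS: "finite S" using assms finite_subset fin_V by blast
  have "S = (S \<inter> Ls) \<union> (S \<inter> Rs)" using assms V_eq by auto
  moreover have "card ((S \<inter> Ls) \<union> (S \<inter> Rs)) = card (S \<inter> Ls) + card (S \<inter> Rs)"
    by (rule card_Un_disjoint) (use fS disj in auto)
  ultimately have c1: "card S = card (S \<inter> Ls) + card (S \<inter> Rs)" by simp
  have i1: "card (Ls - S) = p - card (Ls \<inter> S)" using card_Diff_subset_Int[of Ls S] by simp
  have i2: "card (Ls \<inter> S) \<le> p" using card_mono[of Ls "Ls \<inter> S"] by simp
  have j1: "card (Rs - S) = q - card (Rs \<inter> S)" using card_Diff_subset_Int[of Rs S] by simp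
  have j2: "card (Rs \<inter> S) \<le> q" using card_mono[of Rs "Rs \<inter> S"] by simp
  have c2: "card (Ls - S) + card (S \<inter> Ls) = p" using i1 i2 by (simp add: Int_commute)
  have c3: "card (Rs - S) + card (S \<inter> Rs) = q" using j1 j2 by (simp add: Int_commute)
  show ?thesis using c1 c2 c3 unfolding wa_def wb_def by linarith
qed

lemma wa0: "wa S = 0 \<Longrightarrow> Ls \<subseteq> S" unfolding wa_def by auto
lemma wb0: "wb S = 0 \<Longrightarrow> Rs \<subseteq> S" unfolding wb_def by auto
lemma wa_lt: assumes "wa S < p" shows "\<exists>l\<in>Ls. l \<in> S"
proof (rule ccontr)
  assume "\<not> ?thesis"
  then have "Ls - S = Ls" by auto
  then show False using assms by (simp add: wa_def)
qed
lemma wb_lt: assumes "wb S < q" shows "\<exists>l\<in>Rs. l \<in> S"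
proof (rule ccontr)
  assume "\<not> ?thesis"
  then have "Rs - S = Rs" by auto
  then show False using assms by (simp add: wb_def)
qed
lemma wa_lt': assumes "l \<in> Ls" "l \<in> S" shows "wa S < p"
proof -
  have "Ls - S \<subset> Ls" using assms by auto
  then show ?thesis unfolding wa_def using psubset_card_mono[of Ls "Ls - S"] by simp
qed
lemma wb_lt': assumes "l \<in> Rs" "l \<in> S" shows "wb S < q"
proof -
  have "Rs - S \<subset> Rs" using assms by auto
  then show ?thesis unfolding wb_def using psubset_card_mono[of Rs "Rs - S"] by simp
qed

lemma white_conn_trivial:
  assumes "\<forall>y\<in>VV - B. isl y = b" "white_conn VV KE B x y"
  shows "x = y"
  using assms(2) unfolding white_conn_def
  by (cases rule: rtranclp.cases) (use assms(1) in \<open>auto simp: KE_def\<close>)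

lemma reach_one_side:
  assumes S: "S \<subseteq> VV" and P: "\<forall>x\<in>VV - S. isl x = b" and u: "u \<in> VV" "isl u \<noteq> b"
  shows "psd_reach VV KE S VV"
proof -
  have "psd_reach VV KE S (S \<union> F)" if "finite F" "F \<subseteq> VV - S" for F
    using that
  proof (induction F rule: finite_induct)
    case empty then show ?case by (simp add: psd_reach.base)
  next
    case (insert x F)
    have uS: "u \<in> S \<union> F" using u P by auto
    have "psd_force VV KE (S \<union> F) u x"
      unfolding psd_force_def
    proof (intro conjI allI impI)
      show "u \<in> VV" "u \<in> S \<union> F" using u uS by auto
      show "x \<in> VV - (S \<union> F)" using insert by auto
      show "KE u x" using insert P u by (auto simp: KE_def)
      fix w' assume "w' \<in> VV - (S \<union> F) \<and> KE u w' \<and> white_conn VV KE (S \<union> F) x w'"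
      then show "w' = x" using white_conn_trivial[of "S \<union> F" b x w'] P by auto
    qed
    moreover have "psd_reach VV KE S (S \<union> F)" using insert by auto
    ultimately have "psd_reach VV KE S (insert x (S \<union> F))" by (rule psd_reach.step[rotated])
    then show ?case by simp
  qed
  from this[of "VV - S"] show ?thesis using S by (simp add: Un_absorb1 Un_Diff_cancel)
qed

lemma reach_two:
  assumes S: "S \<subseteq> VV" and r: "r \<in> VV - S" "isl r \<noteq> b"
    and others: "\<forall>x\<in>VV - S. x \<noteq> r \<longrightarrow> isl x = b" and u: "u \<in> S" "isl u = b"
  shows "psd_reach VV KE S VV"
proof -
  have "psd_force VV KE S u r"
    unfolding psd_force_def using S r others u by (auto simp: KE_def)
  then have 1: "psd_reach VV KE S (insert r S)" by (metis psd_reach.base psd_reach.step)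
  have 2: "psd_reach VV KE (insert r S) VV"
    by (rule reach_one_side[of _ b r]) (use S r others in auto)
  show ?thesis using reach_trans[OF 2 1] .
qed

lemma no_force:
  assumes "\<forall>u\<in>S. \<exists>w1 w2 z. w1 \<in> VV - S \<and> w2 \<in> VV - S \<and> z \<in> VV - S \<and> w1 \<noteq> w2 \<and>
            isl w1 \<noteq> isl u \<and> isl w2 \<noteq> isl u \<and> isl z = isl u"
  shows "\<not> psd_force VV KE S u w"
proof
  assume f: "psd_force VV KE S u w"
  have uS: "u \<in> S" and w: "w \<in> VV - S" and kw: "KE u w"
    and fa: "\<forall>w'. w' \<in> VV - S \<and> KE u w' \<and> white_conn VV KE S w w' \<longrightarrow> w' = w"
    using f unfolding psd_force_def by blast+
  have iw: "isl w \<noteq> isl u" using kw unfolding KE_def by simp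
  obtain w1 w2 z where *: "w1 \<in> VV - S" "w2 \<in> VV - S" "z \<in> VV - S" "w1 \<noteq> w2"
    "isl w1 \<noteq> isl u" "isl w2 \<noteq> isl u" "isl z = isl u" using bspec[OF assms uS] by blast
  have "\<exists>w'. w' \<in> VV - S \<and> isl w' \<noteq> isl u \<and> w' \<noteq> w"
  proof (cases "w1 = w")
    case True then show ?thesis using *(2,4,6) by blast
  next
    case False then show ?thesis using *(1,5) by blast
  qed
  then obtain w' where w': "w' \<in> VV - S" "isl w' \<noteq> isl u" "w' \<noteq> w" by blast
  let ?R = "\<lambda>a b. a \<in> VV - S \<and> b \<in> VV - S \<and> KE a b"
  have r1: "?R w z" using w *(3,7) iw unfolding KE_def by simp
  have r2: "?R z w'" using w'(1,2) *(3,7) unfolding KE_def by simp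
  have "?R\<^sup>*\<^sup>* w z" using r1 by (rule r_into_rtranclp)
  then have "?R\<^sup>*\<^sup>* w w'" using r2 by (rule rtranclp.rtrancl_into_rtrancl)
  then have wc: "white_conn VV KE S w w'" by (simp add: white_conn_def)
  have "KE u w'" using w'(2) unfolding KE_def by simp
  then have "w' = w" using fa w'(1) wc by blast
  then show False using w'(3) by simp
qed

lemma forcing_iff:
  assumes S: "S \<subseteq> VV" shows "psd_forcing_set VV KE S \<longleftrightarrow> good S"
proof
  assume g: "good S"
  have "psd_reach VV KE S VV"
  proof -
    consider "wa S = 0" | "wb S = 0" | "wb S = 1 \<and> wa S < p" | "wa S = 1 \<and> wb S < q"
      using g unfolding good_def by (elim disjE) auto
    then show ?thesis
    proof cases
      case 1
      then show ?thesis using wa0[OF 1] Inl0 V_eq isl_Rs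
        by (intro reach_one_side[OF S, of False "Inl 0"]) auto
    next
      case 2
      then show ?thesis using wb0[OF 2] Inr0 V_eq isl_Ls
        by (intro reach_one_side[OF S, of True "Inr 0"]) auto
    next
      case 3
      then obtain r where r: "Rs - S = {r}" unfolding wb_def by (meson card_1_singletonE)
      obtain l where l: "l \<in> Ls" "l \<in> S" using wa_lt 3 by blast
      show ?thesis
        by (rule reach_two[OF S, of r True l]) (use r l V_eq isl_Ls isl_Rs in auto)
    next
      case 4
      then obtain r where r: "Ls - S = {r}" unfolding wa_def by (meson card_1_singletonE)
      obtain l where l: "l \<in> Rs" "l \<in> S" using wb_lt 4 by blast
      show ?thesis
        by (rule reach_two[OF S, of r False l]) (use r l V_eq isl_Ls isl_Rs in auto)
    qed
  qed
  then show "psd_forcing_set VV KE S" using S by (simp add: psd_forcing_set_def)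
next
  assume f: "psd_forcing_set VV KE S"
  show "good S"
  proof (rule ccontr)
    assume ng: "\<not> good S"
    have a1: "wa S \<ge> 1" and b1: "wb S \<ge> 1" using ng good_def by auto
    have "\<forall>u\<in>S. \<exists>w1 w2 z. w1 \<in> VV - S \<and> w2 \<in> VV - S \<and> z \<in> VV - S \<and> w1 \<noteq> w2 \<and>
            isl w1 \<noteq> isl u \<and> isl w2 \<noteq> isl u \<and> isl z = isl u"
    proof
      fix u assume uS: "u \<in> S"
      show "\<exists>w1 w2 z. w1 \<in> VV - S \<and> w2 \<in> VV - S \<and> z \<in> VV - S \<and> w1 \<noteq> w2 \<and>
            isl w1 \<noteq> isl u \<and> isl w2 \<noteq> isl u \<and> isl z = isl u"
      proof (cases "isl u")
        case True
        then have "u \<in> Ls" using uS S V_isl by auto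
        then have "wa S < p" using wa_lt' uS by blast
        then have "wb S \<ge> 2" using ng b1 good_def by auto
        then obtain w1 w2 where w: "w1 \<in> Rs - S" "w2 \<in> Rs - S" "w1 \<noteq> w2"
          using two_elems[of "Rs - S"] unfolding wb_def by auto
        obtain z where z: "z \<in> Ls - S" using a1 unfolding wa_def
          by (metis card.empty ex_in_conv not_one_le_zero)
        show ?thesis using w z True isl_Ls isl_Rs V_eq by (intro exI[of _ w1] exI[of _ w2] exI[of _ z]) auto
      next
        case False
        then have "u \<in> Rs" using uS S V_isl V_eq by auto
        then have "wb S < q" using wb_lt' uS by blast
        then have "wa S \<ge> 2" using ng a1 good_def by auto
        then obtain w1 w2 where w: "w1 \<in> Ls - S" "w2 \<in> Ls - S" "w1 \<noteq> w2"
          using two_elems[of "Ls - S"] unfolding wa_def by auto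
        obtain z where z: "z \<in> Rs - S" using b1 unfolding wb_def
          by (metis card.empty ex_in_conv not_one_le_zero)
        show ?thesis using w z False isl_Ls isl_Rs V_eq by (intro exI[of _ w1] exI[of _ w2] exI[of _ z]) auto
      qed
    qed
    then have "\<And>u w. \<not> psd_force VV KE S u w" using no_force by blast
    moreover have "S \<noteq> VV"
    proof
      assume "S = VV"
      then have "wa S = 0" unfolding wa_def V_eq by auto
      then show False using a1 by simp
    qed
    ultimately show False using no_force_not_forcing f psd_forcing_set_def by blast
  qed
qed

end


lemma isolated_walk:
  assumes "(\<lambda>a b. a \<in> X \<and> b \<in> X \<and> R a b)\<^sup>*\<^sup>* x y" "\<forall>z\<in>X. \<not> R x z"
  shows "y = x"
  using assms(1) by (rule converse_rtranclpE) (use assms(2) in auto)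

lemma invariant_walk:
  assumes "(\<lambda>a b. a \<in> X \<and> b \<in> X \<and> R a b)\<^sup>*\<^sup>* x y" "Q x"
    "\<And>a b. a \<in> X \<Longrightarrow> b \<in> X \<Longrightarrow> R a b \<Longrightarrow> Q a \<Longrightarrow> Q b"
  shows "Q y"
  using assms(1,2) by (induction rule: rtranclp_induct) (use assms(3) in blast)+

lemma not_conn:
  assumes "x \<in> X" "y \<in> X" "\<not> (\<lambda>a b. a \<in> X \<and> b \<in> X \<and> R a b)\<^sup>*\<^sup>* x y"
  shows "\<not> graph_connected X R"
  using assms unfolding graph_connected_def by blast

lemma recon_adj_sym: "recon_adj a b = recon_adj b a"
  unfolding recon_adj_def by (simp add: Un_commute)

lemma recon_adj_cases:
  assumes "recon_adj S T"
  obtains x where "x \<notin> S" "T = insert x S" | x where "x \<notin> T" "S = insert x T"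
proof -
  obtain x where x: "(S - T) \<union> (T - S) = {x}" using assms unfolding recon_adj_def
    by (meson card_1_singletonE)
  have e: "\<And>y. (y \<in> S \<and> y \<notin> T) \<or> (y \<in> T \<and> y \<notin> S) \<longleftrightarrow> y = x"
    using x by (simp add: set_eq_iff)
  show ?thesis
  proof (cases "x \<in> S")
    case True
    then have "x \<notin> T" using e by blast
    moreover have "S = insert x T"
    proof (rule set_eqI)
      fix y show "y \<in> S \<longleftrightarrow> y \<in> insert x T" using e[of y] True \<open>x \<notin> T\<close> by auto
    qed
    ultimately show ?thesis using that by blast
  next
    case False
    then have "x \<in> T" using e by blast
    moreover have "T = insert x S"
    proof (rule set_eqI)
      fix y show "y \<in> T \<longleftrightarrow> y \<in> insert x S" using e[of y] False \<open>x \<in> T\<close> by auto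
    qed
    ultimately show ?thesis using that False by blast
  qed
qed

lemma recon_adj_insert: assumes "x \<notin> S" shows "recon_adj S (insert x S)"
proof -
  have "(S - insert x S) \<union> (insert x S - S) = {x}" using assms by auto
  then show ?thesis by (simp add: recon_adj_def)
qed

context kpq
begin

abbreviation "FF k \<equiv> recon_vertices VV KE k"
abbreviation "walk k \<equiv> (\<lambda>a b. a \<in> FF k \<and> b \<in> FF k \<and> recon_adj a b)\<^sup>*\<^sup>*"

lemma FF_iff: "S \<in> FF k \<longleftrightarrow> S \<subseteq> VV \<and> good S \<and> card S \<le> k"
proof -
  have "S \<subseteq> VV \<Longrightarrow> psd_forcing_set VV KE S = good S" by (rule forcing_iff)
  then show ?thesis unfolding recon_vertices_def psd_forcing_set_def by auto
qed

lemma good_cases: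
  assumes "good S"
  obtains "wa S = 0" | "wb S = 0" | "wb S = 1" "wa S < p" | "wa S = 1" "wb S < q"
  using assms unfolding good_def by auto

lemma good_mono: assumes "good S" "S \<subseteq> T" shows "good T"
proof -
  have "wa T \<le> wa S" unfolding wa_def by (rule card_mono) (use assms in auto)
  moreover have "wb T \<le> wb S" unfolding wb_def by (rule card_mono) (use assms in auto)
  ultimately show ?thesis using assms(1) unfolding good_def by auto
qed

lemma good_card: assumes "S \<subseteq> VV" "good S" "p \<le> q" shows "p \<le> card S"
  using card_S[OF assms(1)] assms(2,3) wa_le[of S] wb_le[of S] unfolding good_def by linarith

lemma walk_sym: "walk k x y \<Longrightarrow> walk k y x"
proof (induction rule: rtranclp_induct)
  case base then show ?case by simp
next
  case (step y z)
  then show ?case using recon_adj_sym by (metis (mono_tags, lifting) converse_rtranclp_into_rtranclp)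
qed

lemma up_walk:
  assumes "good S" "S \<subseteq> T" "T \<subseteq> VV" "card T \<le> k"
  shows "walk k S T"
proof -
  have fT: "finite T" using assms(3) finite_subset fin_V by blast
  have "walk k S (S \<union> F)" if "finite F" "F \<subseteq> T - S" for F
    using that
  proof (induction F rule: finite_induct)
    case empty then show ?case by simp
  next
    case (insert x F)
    have IH: "walk k S (S \<union> F)" using insert by auto
    have s1: "S \<union> F \<subseteq> T" "insert x (S \<union> F) \<subseteq> T" using assms insert by auto
    have c1: "card (S \<union> F) \<le> k" using card_mono[OF fT s1(1)] assms(4) by linarith
    have c2: "card (insert x (S \<union> F)) \<le> k" using card_mono[OF fT s1(2)] assms(4) by linarith
    have m1: "S \<union> F \<in> FF k" unfolding FF_iff
      using assms s1 c1 good_mono[OF assms(1), of "S \<union> F"] by auto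
    have m2: "insert x (S \<union> F) \<in> FF k" unfolding FF_iff
      using assms s1 c2 good_mono[OF assms(1), of "insert x (S \<union> F)"] by auto
    have "recon_adj (S \<union> F) (insert x (S \<union> F))" using insert by (intro recon_adj_insert) auto
    then have "walk k S (insert x (S \<union> F))" using IH m1 m2
      by (metis (mono_tags, lifting) rtranclp.rtrancl_into_rtrancl)
    then show ?case by simp
  qed
  from this[of "T - S"] show ?thesis using fT assms(2) by (simp add: Un_absorb1)
qed

lemma wa_Ls: "wa Ls = 0" by (simp add: wa_def)
lemma wb_Rs: "wb Rs = 0" by (simp add: wb_def)
lemma wb_Ls: "wb Ls = q" using disj by (simp add: wb_def Diff_triv Int_commute)
lemma wa_Rs: "wa Rs = p" using disj by (simp add: wa_def Diff_triv)
lemma good_Ls: "good Ls" by (simp add: good_def wa_Ls)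
lemma good_Rs: "good Rs" by (simp add: good_def wb_Rs)
lemma Ls_V: "Ls \<subseteq> VV" and Rs_V: "Rs \<subseteq> VV" using V_eq by auto

lemma hubA: "S \<subseteq> VV \<Longrightarrow> Ls \<subseteq> S \<Longrightarrow> card S \<le> k \<Longrightarrow> walk k S Ls"
  using up_walk[OF good_Ls] walk_sym by blast
lemma hubB: "S \<subseteq> VV \<Longrightarrow> Rs \<subseteq> S \<Longrightarrow> card S \<le> k \<Longrightarrow> walk k S Rs"
  using up_walk[OF good_Rs] walk_sym by blast

lemma card_insL: "card (insert r Ls) = p + 1" if "r \<in> Rs"
  using that disj by (subst card_insert_disjoint) auto
lemma card_insR: "card (insert r Rs) = q + 1" if "r \<in> Ls"
  using that disj by (subst card_insert_disjoint) auto

lemma hubD: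
  assumes S: "S \<in> FF k" and a: "wa S = 1" and b: "wb S < q" and k: "p + 1 \<le> k"
  shows "walk k S Ls"
proof -
  obtain l where l: "Ls - S = {l}" using a unfolding wa_def by (meson card_1_singletonE)
  obtain r where r: "r \<in> Rs" "r \<in> S" using wb_lt b by blast
  define S0 where "S0 = insert r (Ls - {l})"
  have S0S: "S0 \<subseteq> S" using l r unfolding S0_def by auto
  have "Ls - S0 = {l}" using l r disj unfolding S0_def by auto
  then have "wa S0 = 1" by (simp add: wa_def)
  moreover have "wb S0 < q" using wb_lt'[OF r(1)] unfolding S0_def by simp
  ultimately have g0: "good S0" unfolding good_def by simp
  have SV: "S \<subseteq> VV" "card S \<le> k" using S FF_iff by auto
  have 1: "walk k S S0" using up_walk[OF g0 S0S SV] walk_sym by blast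
  have T: "S0 \<subseteq> insert r Ls" "insert r Ls \<subseteq> VV" "card (insert r Ls) \<le> k"
    using r card_insL[of r] k V_eq unfolding S0_def by auto
  have 2: "walk k S0 (insert r Ls)" using up_walk[OF g0 T] .
  have 3: "walk k (insert r Ls) Ls" using hubA[of "insert r Ls" k] T by auto
  show ?thesis using 1 2 3 by (meson rtranclp_trans)
qed

lemma hubC:
  assumes S: "S \<in> FF k" and a: "wb S = 1" and b: "wa S < p" and k: "q + 1 \<le> k"
  shows "walk k S Rs"
proof -
  obtain l where l: "Rs - S = {l}" using a unfolding wb_def by (meson card_1_singletonE)
  obtain r where r: "r \<in> Ls" "r \<in> S" using wa_lt b by blast
  define S0 where "S0 = insert r (Rs - {l})"
  have S0S: "S0 \<subseteq> S" using l r unfolding S0_def by auto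
  have "Rs - S0 = {l}" using l r disj unfolding S0_def by auto
  then have "wb S0 = 1" by (simp add: wb_def)
  moreover have "wa S0 < p" using wa_lt'[OF r(1)] unfolding S0_def by simp
  ultimately have g0: "good S0" unfolding good_def by simp
  have SV: "S \<subseteq> VV" "card S \<le> k" using S FF_iff by auto
  have 1: "walk k S S0" using up_walk[OF g0 S0S SV] walk_sym by blast
  have T: "S0 \<subseteq> insert r Rs" "insert r Rs \<subseteq> VV" "card (insert r Rs) \<le> k"
    using r card_insR[of r] k V_eq unfolding S0_def by auto
  have 2: "walk k S0 (insert r Rs)" using up_walk[OF g0 T] .
  have 3: "walk k (insert r Rs) Rs" using hubB[of "insert r Rs" k] T by auto
  show ?thesis using 1 2 3 by (meson rtranclp_trans)
qed

lemma ins_L: assumes "x \<in> Ls" "x \<notin> S"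
  shows "wa S = wa (insert x S) + 1" "wb (insert x S) = wb S"
proof -
  have "Ls - insert x S = (Ls - S) - {x}" by auto
  moreover have "x \<in> Ls - S" using assms by auto
  moreover have "card (Ls - S) > 0" using \<open>x \<in> Ls - S\<close> by (auto simp: card_gt_0_iff)
  ultimately show "wa S = wa (insert x S) + 1" unfolding wa_def
    using card_Diff_singleton[OF \<open>x \<in> Ls - S\<close>] by simp
  have "Rs - insert x S = Rs - S" using assms disj by auto
  then show "wb (insert x S) = wb S" by (simp add: wb_def)
qed

lemma ins_R: assumes "x \<in> Rs" "x \<notin> S"
  shows "wb S = wb (insert x S) + 1" "wa (insert x S) = wa S"
proof -
  have "Rs - insert x S = (Rs - S) - {x}" by auto
  moreover have "x \<in> Rs - S" using assms by auto
  moreover have "card (Rs - S) > 0" using \<open>x \<in> Rs - S\<close> by (auto simp: card_gt_0_iff)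
  ultimately show "wb S = wb (insert x S) + 1" unfolding wb_def
    using card_Diff_singleton[OF \<open>x \<in> Rs - S\<close>] by simp
  have "Ls - insert x S = Ls - S" using assms disj by auto
  then show "wa (insert x S) = wa S" by (simp add: wa_def)
qed

lemma adj_counts:
  assumes "S \<subseteq> VV" "T \<subseteq> VV" "recon_adj S T"
  shows "(wa T = wa S \<and> (wb T = wb S + 1 \<or> wb S = wb T + 1)) \<or>
         (wb T = wb S \<and> (wa T = wa S + 1 \<or> wa S = wa T + 1))"
  using assms(3)
proof (cases rule: recon_adj_cases)
  case (1 x)
  then have "x \<in> Ls \<or> x \<in> Rs" using assms V_eq by auto
  then show ?thesis using ins_L[of x S] ins_R[of x S] 1 by auto
next
  case (2 x)
  then have "x \<in> Ls \<or> x \<in> Rs" using assms V_eq by auto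
  then show ?thesis using ins_L[of x T] ins_R[of x T] 2 by auto
qed

lemma S1_counts: "wa {Inl 0, Inr 0} = p - 1" "wb {Inl 0, Inr 0} = q - 1" "card {Inl (0::nat), Inr (0::nat)} = 2"
proof -
  have a0: "wa {} = p" "wb {} = q" by (simp_all add: wa_def wb_def)
  have "wb {} = wb (insert (Inr 0) {}) + 1" "wa (insert (Inr 0) {}) = wa {}"
    using ins_R[of "Inr 0" "{}"] Inr0 by auto
  moreover have "wa (insert (Inr 0) {}) = wa {Inl 0, Inr 0} + 1" "wb {Inl 0, Inr 0} = wb (insert (Inr 0) {})"
    using ins_L[of "Inl 0" "{Inr 0}"] Inl0 by auto
  ultimately show "wa {Inl 0, Inr 0} = p - 1" "wb {Inl 0, Inr 0} = q - 1" using a0 by auto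
  show "card {Inl (0::nat), Inr (0::nat)} = 2" by simp
qed

lemma conn_big:
  assumes k: "p + q - 2 \<le> k" "p + 1 \<le> k" "q + 1 \<le> k"
  shows "recon_connected VV KE k"
proof -
  define S2 where "S2 = VV - {Inl 0, Inr 0}"
  have S2V: "S2 \<subseteq> VV" unfolding S2_def by blast
  have "Ls - S2 = Ls \<inter> {Inl 0, Inr 0}" using Ls_V unfolding S2_def by blast
  also have "\<dots> = {Inl 0}" using Inl0 isl_Ls[of "Inr 0"] by auto
  finally have e1: "Ls - S2 = {Inl 0}" .
  have "Rs - S2 = Rs \<inter> {Inl 0, Inr 0}" using Rs_V unfolding S2_def by blast
  also have "\<dots> = {Inr 0}" using Inr0 isl_Rs[of "Inl 0"] by auto
  finally have e2: "Rs - S2 = {Inr 0}" .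
  from e1 e2 have w2: "wa S2 = 1" "wb S2 = 1" by (simp_all add: wa_def wb_def)
  have g2: "good S2" using w2 q2 unfolding good_def by simp
  have "card S2 = p + q - 2" using card_S[OF S2V] w2 by linarith
  then have S2F: "S2 \<in> FF k" using FF_iff[of S2 k] S2V g2 k(1) by simp
  have a1: "walk k S2 Ls" using hubD[OF S2F w2(1)] w2(2) q2 k(2) by simp
  have a2: "walk k S2 Rs" using hubC[OF S2F w2(2)] w2(1) p2 k(3) by simp
  have RL: "walk k Rs Ls" using rtranclp_trans[OF walk_sym[OF a2] a1] .
  have all: "walk k S Ls" if S: "S \<in> FF k" for S
  proof -
    have SV: "S \<subseteq> VV" "good S" "card S \<le> k" using S FF_iff by auto
    from SV(2) show ?thesis
    proof (cases rule: good_cases)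
      case 1 show ?thesis by (rule hubA[OF SV(1) wa0[OF 1] SV(3)])
    next
      case 2 show ?thesis by (rule rtranclp_trans[OF hubB[OF SV(1) wb0[OF 2] SV(3)] RL])
    next
      case 3 show ?thesis by (rule rtranclp_trans[OF hubC[OF S 3 k(3)] RL])
    next
      case 4 show ?thesis by (rule hubD[OF S 4 k(2)])
    qed
  qed
  have LF: "Ls \<in> FF k" using FF_iff Ls_V good_Ls k by auto
  show ?thesis unfolding recon_connected_def graph_connected_def
  proof (intro conjI ballI)
    show "FF k \<noteq> {}" using LF by blast
    fix x y assume xy: "x \<in> FF k" "y \<in> FF k"
    show "walk k x y" using rtranclp_trans[OF all[OF xy(1)] walk_sym[OF all[OF xy(2)]]] .
  qed
qed

end


context kpq
begin

lemma FF_empty: assumes "p \<le> q" "k < p" shows "\<not> recon_connected VV KE k"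
proof
  assume "recon_connected VV KE k"
  then obtain S where "S \<in> FF k" unfolding recon_connected_def graph_connected_def by blast
  then have "S \<subseteq> VV" "good S" "card S \<le> k" using FF_iff by auto
  then have "p \<le> card S" using good_card assms(1) by blast
  then show False using \<open>card S \<le> k\<close> assms(2) by linarith
qed

lemma disconn_mid:
  assumes "3 \<le> p" "p \<le> q" shows "\<not> recon_connected VV KE (p + q - 3)"
proof -
  let ?k = "p + q - 3"
  have LF: "Ls \<in> FF ?k" using FF_iff Ls_V good_Ls assms by auto
  have RF: "Rs \<in> FF ?k" using FF_iff Rs_V good_Rs assms by auto
  have "\<not> walk ?k Ls Rs"
  proof
    assume w: "walk ?k Ls Rs"
    have "wa Rs \<le> 1 \<and> 2 \<le> wb Rs"
    proof (rule invariant_walk[OF w, where Q="\<lambda>S. wa S \<le> 1 \<and> 2 \<le> wb S"])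
      show "wa Ls \<le> 1 \<and> 2 \<le> wb Ls" using wa_Ls wb_Ls q2 by simp
      fix a b assume ab: "a \<in> FF ?k" "b \<in> FF ?k" "recon_adj a b" "wa a \<le> 1 \<and> 2 \<le> wb a"
      have bF: "b \<subseteq> VV" "good b" "card b \<le> ?k" "a \<subseteq> VV" using ab FF_iff by auto
      have cs: "card b + wa b + wb b = p + q" using card_S bF by auto
      have ad: "(wa b = wa a \<and> (wb b = wb a + 1 \<or> wb a = wb b + 1)) \<or>
         (wb b = wb a \<and> (wa b = wa a + 1 \<or> wa a = wa b + 1))"
        using adj_counts[OF bF(4) bF(1) ab(3)] .
      from ad show "wa b \<le> 1 \<and> 2 \<le> wb b"
      proof (elim disjE conjE)
        assume "wa b = wa a" "wb b = wb a + 1" then show ?thesis using ab(4) by simp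
      next
        assume "wa b = wa a" "wb a = wb b + 1" then show ?thesis using ab(4) cs bF(3) assms by linarith
      next
        assume h: "wb b = wb a" "wa b = wa a + 1"
        then have "wa b \<noteq> 0" "wb b \<noteq> 0" "wb b \<noteq> 1" using ab(4) by auto
        then have "wa b = 1" using bF(2) unfolding good_def by auto
        then show ?thesis using h ab(4) by simp
      next
        assume "wb b = wb a" "wa a = wa b + 1" then show ?thesis using ab(4) by simp
      qed
    qed
    then show False using wa_Rs assms by simp
  qed
  then show ?thesis unfolding recon_connected_def using not_conn[OF LF RF] by blast
qed

lemma disconn_q:
  assumes "p = 2" "3 \<le> q" shows "\<not> recon_connected VV KE q"
proof -
  have LF: "Ls \<in> FF q" using FF_iff Ls_V good_Ls assms card_Ls by auto
  have RF: "Rs \<in> FF q" using FF_iff Rs_V good_Rs assms by auto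
  have iso: "\<forall>z\<in>FF q. \<not> recon_adj Rs z"
  proof (intro ballI notI)
    fix z assume z: "z \<in> FF q" "recon_adj Rs z"
    have zF: "z \<subseteq> VV" "good z" "card z \<le> q" using z FF_iff by auto
    have cs: "card z + wa z + wb z = p + q" using card_S zF by auto
    have ad: "(wa z = wa Rs \<and> (wb z = wb Rs + 1 \<or> wb Rs = wb z + 1)) \<or>
         (wb z = wb Rs \<and> (wa z = wa Rs + 1 \<or> wa Rs = wa z + 1))"
      using adj_counts[OF Rs_V zF(1) z(2)] .
    then show False
    proof (elim disjE conjE)
      assume "wa z = wa Rs" "wb z = wb Rs + 1"
      then show False using zF(2) wa_Rs wb_Rs assms unfolding good_def by auto
    next
      assume "wa z = wa Rs" "wb Rs = wb z + 1" then show False using wb_Rs by simp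
    next
      assume "wb z = wb Rs" "wa z = wa Rs + 1" then show False using wa_Rs wa_le[of z] by simp
    next
      assume "wb z = wb Rs" "wa Rs = wa z + 1" then show False using wa_Rs wb_Rs cs zF(3) assms by simp
    qed
  qed
  have "\<not> walk q Rs Ls"
  proof
    assume w: "walk q Rs Ls"
    have "Ls = Rs" by (rule isolated_walk[OF w iso])
    then show False using Inl0 disj by auto
  qed
  then show ?thesis unfolding recon_connected_def using not_conn[OF RF LF] by blast
qed

lemma disconn_2:
  assumes "p = 2" "3 \<le> q" shows "\<not> recon_connected VV KE 2"
proof -
  have LF: "Ls \<in> FF 2" using FF_iff Ls_V good_Ls assms card_Ls by auto
  have XV: "{Inl 0, Inr 0} \<subseteq> VV" using Inl0 Inr0 V_eq by auto
  have "good {Inl 0, Inr 0}" using S1_counts assms unfolding good_def by auto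
  then have XF: "{Inl 0, Inr 0} \<in> FF 2" using FF_iff XV S1_counts by auto
  have iso: "\<forall>z\<in>FF 2. \<not> recon_adj Ls z"
  proof (intro ballI notI)
    fix z assume z: "z \<in> FF 2" "recon_adj Ls z"
    have zF: "z \<subseteq> VV" "good z" "card z \<le> 2" using z FF_iff by auto
    have cs: "card z + wa z + wb z = p + q" using card_S zF by auto
    have ad: "(wa z = wa Ls \<and> (wb z = wb Ls + 1 \<or> wb Ls = wb z + 1)) \<or>
         (wb z = wb Ls \<and> (wa z = wa Ls + 1 \<or> wa Ls = wa z + 1))"
      using adj_counts[OF Ls_V zF(1) z(2)] .
    then show False
    proof (elim disjE conjE)
      assume "wa z = wa Ls" "wb z = wb Ls + 1" then show False using wb_Ls wb_le[of z] by simp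
    next
      assume "wa z = wa Ls" "wb Ls = wb z + 1" then show False using wa_Ls wb_Ls cs zF(3) assms by simp
    next
      assume "wb z = wb Ls" "wa z = wa Ls + 1"
      then show False using zF(2) wa_Ls wb_Ls assms unfolding good_def by auto
    next
      assume "wb z = wb Ls" "wa Ls = wa z + 1" then show False using wa_Ls by simp
    qed
  qed
  have "\<not> walk 2 Ls {Inl 0, Inr 0}"
  proof
    assume w: "walk 2 Ls {Inl 0, Inr 0}"
    have "{Inl 0, Inr 0} = Ls" by (rule isolated_walk[OF w iso])
    then show False using Inr0 disj by auto
  qed
  then show ?thesis unfolding recon_connected_def using not_conn[OF LF XF] by blast
qed

lemma conn3:
  assumes "p = 2" "4 \<le> q" shows "recon_connected VV KE 3"
proof -
  have all: "walk 3 S Ls" if S: "S \<in> FF 3" for S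
  proof -
    have SV: "S \<subseteq> VV" "good S" "card S \<le> 3" using S FF_iff by auto
    have cs: "card S + wa S + wb S = p + q" using card_S SV by auto
    from SV(2) show ?thesis
    proof (cases rule: good_cases)
      case 1 show ?thesis by (rule hubA[OF SV(1) wa0[OF 1] SV(3)])
    next
      case 2 then show ?thesis using cs SV(3) assms wa_le[of S] by linarith
    next
      case 3 then show ?thesis using cs SV(3) assms by linarith
    next
      case 4
      have "p + 1 \<le> 3" using assms by simp
      then show ?thesis by (rule hubD[OF S 4])
    qed
  qed
  have LF: "Ls \<in> FF 3" using FF_iff Ls_V good_Ls assms card_Ls by auto
  show ?thesis unfolding recon_connected_def graph_connected_def
  proof (intro conjI ballI)
    show "FF 3 \<noteq> {}" using LF by blast
    fix x y assume xy: "x \<in> FF 3" "y \<in> FF 3"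
    show "walk 3 x y" using rtranclp_trans[OF all[OF xy(1)] walk_sym[OF all[OF xy(2)]]] .
  qed
qed

lemma least_k0:
  assumes "\<forall>k\<ge>N. recon_connected VV KE k" "\<not> recon_connected VV KE (N - 1)" "1 \<le> N"
  shows "z0plus VV KE = N"
  unfolding z0plus_def
proof (rule Least_equality)
  show "\<forall>k\<ge>N. recon_connected VV KE k" by fact
  fix y assume y: "\<forall>k\<ge>y. recon_connected VV KE k"
  show "N \<le> y"
  proof (rule ccontr)
    assume "\<not> N \<le> y"
    then have "y \<le> N - 1" by simp
    then show False using y assms(2) by blast
  qed
qed

lemma fin_forcing: "finite {S. P S \<and> S \<subseteq> VV}"
  by (rule finite_subset[of _ "Pow VV"]) auto

lemma fin_pf: "finite {S. psd_forcing_set VV KE S}"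
proof -
  have "{S. psd_forcing_set VV KE S} \<subseteq> Pow VV" by (auto simp: psd_forcing_set_def)
  then show ?thesis by (rule finite_subset) simp
qed

lemma Zplus_eq: assumes "p \<le> q" shows "Zplus VV KE = p"
  unfolding Zplus_def
proof (rule Min_eqI)
  show "finite (card ` {S. psd_forcing_set VV KE S})" using fin_pf by (rule finite_imageI)
  fix y assume "y \<in> card ` {S. psd_forcing_set VV KE S}"
  then obtain S where f: "psd_forcing_set VV KE S" and y: "y = card S" by auto
  have SV: "S \<subseteq> VV" using f unfolding psd_forcing_set_def by blast
  have g: "good S" using forcing_iff[OF SV] f by simp
  show "p \<le> y" using good_card[OF SV g assms] y by simp
next
  have "psd_forcing_set VV KE Ls" using forcing_iff[OF Ls_V] good_Ls by simp
  then show "p \<in> card ` {S. psd_forcing_set VV KE S}" by (intro image_eqI[where x=Ls]) auto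
qed

lemma min_card:
  assumes m: "minimal_psd_forcing_set VV KE S" and pq: "p \<le> q"
  shows "card S \<le> q"
proof -
  have f: "psd_forcing_set VV KE S" and mn: "\<And>T. T \<subset> S \<Longrightarrow> \<not> psd_forcing_set VV KE T"
    using m unfolding minimal_psd_forcing_set_def by auto
  have S1: "S \<subseteq> VV" using f unfolding psd_forcing_set_def by blast
  have S: "S \<subseteq> VV" "good S" using S1 forcing_iff[OF S1] f by auto
  have key: "S = T" if "T \<subseteq> S" "good T" for T
  proof (rule ccontr)
    assume "S \<noteq> T"
    then have "T \<subset> S" using that by auto
    moreover have "psd_forcing_set VV KE T" using forcing_iff that S by auto
    ultimately show False using mn by blast
  qed
  from S(2) show ?thesis
  proof (cases rule: good_cases)
    case 1 then have "S = Ls" using key[OF wa0[OF 1] good_Ls] by simp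
    then show ?thesis using pq by simp
  next
    case 2 then have "S = Rs" using key[OF wb0[OF 2] good_Rs] by simp
    then show ?thesis by simp
  next
    case 3
    obtain r where r: "Rs - S = {r}" using 3 unfolding wb_def by (meson card_1_singletonE)
    obtain l where l: "l \<in> Ls" "l \<in> S" using wa_lt 3 by blast
    define S0 where "S0 = insert l (Rs - {r})"
    have "Rs - S0 = {r}" using r l disj unfolding S0_def by auto
    then have "wb S0 = 1" by (simp add: wb_def)
    moreover have "wa S0 < p" using wa_lt'[OF l(1)] unfolding S0_def by simp
    ultimately have "good S0" unfolding good_def by simp
    moreover have "S0 \<subseteq> S" using r l unfolding S0_def by auto
    ultimately have "S = S0" using key by blast
    moreover have "card S0 \<le> q"
    proof -
      have "r \<in> Rs" using r by auto
      then have "card (Rs - {r}) = q - 1" by simp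
      moreover have "card S0 \<le> Suc (card (Rs - {r}))" unfolding S0_def by (rule card_insert_le_m1) auto
      ultimately show ?thesis using q2 by linarith
    qed
    ultimately show ?thesis by simp
  next
    case 4
    obtain r where r: "Ls - S = {r}" using 4 unfolding wa_def by (meson card_1_singletonE)
    obtain l where l: "l \<in> Rs" "l \<in> S" using wb_lt 4 by blast
    define S0 where "S0 = insert l (Ls - {r})"
    have "Ls - S0 = {r}" using r l disj unfolding S0_def by auto
    then have "wa S0 = 1" by (simp add: wa_def)
    moreover have "wb S0 < q" using wb_lt'[OF l(1)] unfolding S0_def by simp
    ultimately have "good S0" unfolding good_def by simp
    moreover have "S0 \<subseteq> S" using r l unfolding S0_def by auto
    ultimately have "S = S0" using key by blast
    moreover have "card S0 \<le> p"
    proof -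
      have "r \<in> Ls" using r by auto
      then have "card (Ls - {r}) = p - 1" by simp
      moreover have "card S0 \<le> Suc (card (Ls - {r}))" unfolding S0_def by (rule card_insert_le_m1) auto
      ultimately show ?thesis using p2 by linarith
    qed
    ultimately show ?thesis using pq by simp
  qed
qed

lemma Rs_minimal: "minimal_psd_forcing_set VV KE Rs"
  unfolding minimal_psd_forcing_set_def
proof (intro conjI allI impI)
  show "psd_forcing_set VV KE Rs" using forcing_iff Rs_V good_Rs by simp
  fix T assume T: "T \<subset> Rs"
  then have TV: "T \<subseteq> VV" using Rs_V by auto
  have "Ls - T = Ls" using T disj by auto
  then have a: "wa T = p" by (simp add: wa_def)
  have "Rs - T \<noteq> {}" using T by auto
  then have b: "wb T \<noteq> 0" unfolding wb_def by simp
  have "\<not> good T" using a b p2 unfolding good_def by auto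
  then show "\<not> psd_forcing_set VV KE T" using forcing_iff TV by simp
qed

lemma Zbar_eq: assumes "p \<le> q" shows "Zplus_bar VV KE = q"
  unfolding Zplus_bar_def
proof (rule Max_eqI)
  have "{S. minimal_psd_forcing_set VV KE S} \<subseteq> {S. psd_forcing_set VV KE S}"
    by (auto simp: minimal_psd_forcing_set_def)
  then have "finite {S. minimal_psd_forcing_set VV KE S}" using fin_pf by (rule finite_subset)
  then show "finite (card ` {S. minimal_psd_forcing_set VV KE S})" by (rule finite_imageI)
  fix y assume "y \<in> card ` {S. minimal_psd_forcing_set VV KE S}"
  then obtain S where m: "minimal_psd_forcing_set VV KE S" and y: "y = card S" by auto
  show "y \<le> q" using min_card[OF m assms] y by simp
next
  show "q \<in> card ` {S. minimal_psd_forcing_set VV KE S}" using Rs_minimal by (intro image_eqI[where x=Rs]) auto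
qed

end

lemma part1: assumes "2 \<le> p" "p \<le> q"
  shows "Zplus (KV p q) KE = p \<and> Zplus_bar (KV p q) KE = q"
proof -
  interpret kpq p q using assms by unfold_locales auto
  show ?thesis using Zplus_eq Zbar_eq assms by auto
qed

lemma part2: assumes "3 \<le> p" "p \<le> q"
  shows "z0plus (KV p q) KE = p + q - 2"
proof -
  interpret kpq p q using assms by unfold_locales auto
  show ?thesis
  proof (rule least_k0)
    show "\<forall>k\<ge>p + q - 2. recon_connected (KV p q) KE k" using conn_big assms by auto
    have "p + q - 2 - 1 = p + q - 3" by simp
    then show "\<not> recon_connected (KV p q) KE (p + q - 2 - 1)" using disconn_mid assms by simp
  qed (use assms in auto)
qed

lemma part4: assumes "4 \<le> q"
  shows "z0plus_under (KV 2 q) KE = 3 \<and> z0plus (KV 2 q) KE = q + 1"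
proof -
  interpret kpq 2 q using assms by unfold_locales auto
  have "z0plus (KV 2 q) KE = q + 1"
  proof (rule least_k0)
    show "\<forall>k\<ge>q + 1. recon_connected (KV 2 q) KE k" using conn_big assms by auto
    show "\<not> recon_connected (KV 2 q) KE (q + 1 - 1)" using disconn_q assms by simp
  qed simp
  moreover have "z0plus_under (KV 2 q) KE = 3"
    unfolding z0plus_under_def
  proof (rule Least_equality)
    show "recon_connected (KV 2 q) KE 3" using conn3 assms by simp
    fix y assume y: "recon_connected (KV 2 q) KE y"
    show "3 \<le> y"
    proof (rule ccontr)
      assume "\<not> 3 \<le> y"
      then have "y < 2 \<or> y = 2" by auto
      then show False using y FF_empty[of y] disconn_2 assms by auto
    qed
  qed
  ultimately show ?thesis by simp
qed

theorem proposition4p8: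
  shows "(\<forall>p q. 2 \<le> p \<and> p \<le> q \<longrightarrow>
            Zplus (KV p q) KE = p \<and> Zplus_bar (KV p q) KE = q)
       \<and> (\<forall>p q. 3 \<le> p \<and> p \<le> q \<longrightarrow> z0plus (KV p q) KE = p + q - 2)
       \<and> (\<forall>p. 4 \<le> p \<longrightarrow> z0plus (KV p p) KE = 2 * p - 2 \<and>
                          2 * p - 2 > Zplus_bar (KV p p) KE + 1)
       \<and> (\<forall>q. 4 \<le> q \<longrightarrow> z0plus_under (KV 2 q) KE = 3 \<and> z0plus (KV 2 q) KE = q + 1)"
proof (intro conjI allI impI)
  fix p q :: nat assume "2 \<le> p \<and> p \<le> q" then show "Zplus (KV p q) KE = p" "Zplus_bar (KV p q) KE = q"
    using part1 by auto
next
  fix p q :: nat assume "3 \<le> p \<and> p \<le> q" then show "z0plus (KV p q) KE = p + q - 2"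
    using part2 by auto
next
  fix p :: nat assume p: "4 \<le> p"
  have "z0plus (KV p p) KE = p + p - 2" using part2 p by auto
  then show "z0plus (KV p p) KE = 2 * p - 2" by simp
  have "Zplus_bar (KV p p) KE = p" using part1 p by auto
  then show "2 * p - 2 > Zplus_bar (KV p p) KE + 1" using p by simp
next
  fix q :: nat assume "4 \<le> q" then show "z0plus_under (KV 2 q) KE = 3" "z0plus (KV 2 q) KE = q + 1"
    using part4 by auto
qed

end
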